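(* Let $a\in\mathbb{R}$, $\sigma>0$, $\gamma>0$, $\lambda>0$, $T\ge1$, channel transition probabilities $p_{cc'}$, and let $Q_t$ be defined on $\mathbb{R}\times\{0,1\}\times\{0,1\}$ by the value iteration in the context. Then there exists an optimal scheduling policy $\phi^\star$ for the original risk-sensitive MDP of threshold type: for each $t\in\{1,\ldots,T\}$ and $c\in\{0,1\}$ there is a threshold $\Delta^\star_t(c)\in[0,\infty]$ such that $\phi^\star_t(\Delta,c)$ minimizes $Q_t(\Delta,c;\cdot)$ for all $\Delta\in\mathbb{R}$, $\phi^\star_t(\Delta,c)=1$ whenever $|\Delta|>\Delta^\star_t(c)$, and $\phi^\star_t(\Delta,c)=0$ whenever $|\Delta|<\Delta^\star_t(c)$.
   Context: Model: $x(t+1)=ax(t)+w(t)$ with $w(t)$ i.i.d. $\mathcal{N}(0,\sigma^2)$; Gilbert–Elliott channel state $c(t)\in\{0,1\}$ a Markov chain with $p_{01},p_{10}\in[0,1]$, $p_{00}=1-p_{01}$, $p_{11}=1-p_{10}$; error $\Delta(t)=x(t)-a\hat x(t-1)$; cost $d(\Delta,c,u)=\lambda u+(1-uc)\Delta^2$; objective $\min\mathbb{E}\exp(\gamma\sum_{t=0}^T d(\Delta(t),c(t),u(t)))$. With $\psi(v)=e^{-v^2/(2\sigma^2)}$, value iteration: $V_0\equiv1$, $Q_{t+1}(\Delta,c;0)=e^{\gamma\Delta^2}\sum_{c_+\in\{0,1\}}p_{cc_+}\int_{\mathbb{R}}\psi(\Delta_+-a\Delta)V_t(\Delta_+,c_+)d\Delta_+$,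 $Q_{t+1}(\Delta,c;1)=(1-c)e^{\gamma(\lambda+\Delta^2)}\sum_{c_+}p_{cc_+}\int_{\mathbb{R}}\psi(\Delta_+-a\Delta)V_t(\Delta_+,c_+)d\Delta_++c\,e^{\gamma\lambda}\sum_{c_+}p_{cc_+}\int_{\mathbb{R}}\psi(\Delta_+)V_t(\Delta_+,c_+)d\Delta_+$, $V_{t+1}=\min_{u\in\{0,1\}}Q_{t+1}(\cdot,\cdot;u)$. A deterministic Markov policy choosing at stage $t$ a minimizer of $Q_t(\Delta,c;\cdot)$ is optimal. A policy is of threshold type if it transmits ($u=1$) only when $|\Delta|$ exceeds a threshold depending on $t$ and the channel state. *)

theory Defs
  imports "HOL-Analysis.Analysis"
begin

definition psi :: "real \<Rightarrow> real \<Rightarrow> real" where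
  "psi \<sigma> v = exp (- (v ^ 2) / (2 * \<sigma> ^ 2))"

definition GE_P :: "real \<Rightarrow> real \<Rightarrow> nat \<Rightarrow> nat \<Rightarrow> real" where
  "GE_P p01 p10 c c' =
     (if c = 0 then (if c' = 0 then 1 - p01 else p01)
      else (if c' = 0 then p10 else 1 - p10))"

definition cont_term ::
  "real \<Rightarrow> real \<Rightarrow> real \<Rightarrow> (real \<Rightarrow> nat \<Rightarrow> ennreal) \<Rightarrow> nat \<Rightarrow> real \<Rightarrow> ennreal" where
  "cont_term \<sigma> p01 p10 W c m =
     (\<Sum>c'\<in>{0::nat,1}. ennreal (GE_P p01 p10 c c') *
        (\<integral>\<^sup>+ x. ennreal (psi \<sigma> (x - m)) * W x c' \<partial>lborel))"

definition Qstep ::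
  "real \<Rightarrow> real \<Rightarrow> real \<Rightarrow> real \<Rightarrow> real \<Rightarrow> real \<Rightarrow>
   (real \<Rightarrow> nat \<Rightarrow> ennreal) \<Rightarrow> real \<Rightarrow> nat \<Rightarrow> nat \<Rightarrow> ennreal" where
  "Qstep a \<sigma> \<gamma> lam p01 p10 W \<Delta> c u =
     (if u = 0 then
        ennreal (exp (\<gamma> * \<Delta> ^ 2)) * cont_term \<sigma> p01 p10 W c (a * \<Delta>)
      else
        ennreal ((1 - real c) * exp (\<gamma> * (lam + \<Delta> ^ 2))) * cont_term \<sigma> p01 p10 W c (a * \<Delta>)
        + ennreal (real c * exp (\<gamma> * lam)) * cont_term \<sigma> p01 p10 W c 0)"

primrec Vfun ::
  "real \<Rightarrow> real \<Rightarrow> real \<Rightarrow> real \<Rightarrow> real \<Rightarrow> real \<Rightarrow> nat \<Rightarrow> real \<Rightarrow> nat \<Rightarrow> ennreal" where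
  "Vfun a \<sigma> \<gamma> lam p01 p10 0 = (\<lambda>\<Delta> c. 1)"
| "Vfun a \<sigma> \<gamma> lam p01 p10 (Suc t) =
     (\<lambda>\<Delta> c. min (Qstep a \<sigma> \<gamma> lam p01 p10 (Vfun a \<sigma> \<gamma> lam p01 p10 t) \<Delta> c 0)
                 (Qstep a \<sigma> \<gamma> lam p01 p10 (Vfun a \<sigma> \<gamma> lam p01 p10 t) \<Delta> c 1))"

text \<open>Q_t for t >= 1: Q_{t}(Delta,c;u) = Qstep built from V_{t-1}.\<close>
definition Qfun ::
  "real \<Rightarrow> real \<Rightarrow> real \<Rightarrow> real \<Rightarrow> real \<Rightarrow> real \<Rightarrow> nat \<Rightarrow> real \<Rightarrow> nat \<Rightarrow> nat \<Rightarrow> ennreal" where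
  "Qfun a \<sigma> \<gamma> lam p01 p10 t = Qstep a \<sigma> \<gamma> lam p01 p10 (Vfun a \<sigma> \<gamma> lam p01 p10 (t - 1))"

end

theory Submission
  imports Defs
begin

definition absmono :: "(real \<Rightarrow> ennreal) \<Rightarrow> bool" where
  "absmono w \<longleftrightarrow> (\<forall>x y. \<bar>x\<bar> \<le> \<bar>y\<bar> \<longrightarrow> w x \<le> w y)"

lemma absmono_meas:
  assumes "absmono w"
  shows "w \<in> borel_measurable borel"
proof (rule borel_measurableI_less)
  fix y
  have "is_interval {x. w x < y}" unfolding is_interval_1
  proof (intro ballI allI impI)
    fix a b x assume "a \<in> {x. w x < y}" "b \<in> {x. w x < y}" "a \<le> x \<and> x \<le> b"
    then have "\<bar>x\<bar> \<le> \<bar>a\<bar> \<or> \<bar>x\<bar> \<le> \<bar>b\<bar>" by auto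
    then show "x \<in> {x. w x < y}"
      using assms \<open>a \<in> {x. w x < y}\<close> \<open>b \<in> {x. w x < y}\<close> unfolding absmono_def
      by (auto intro: le_less_trans)
  qed
  then show "{x \<in> space borel. w x < y} \<in> sets borel"
    using real_interval_borel_measurable by simp
qed

lemma absmono_even: "absmono w \<Longrightarrow> w (-x) = w x"
  unfolding absmono_def by (metis abs_minus_cancel order_refl antisym)

lemma psi_anti: "\<bar>u\<bar> \<le> \<bar>v\<bar> \<Longrightarrow> psi \<sigma> v \<le> psi \<sigma> u"
proof -
  assume "\<bar>u\<bar> \<le> \<bar>v\<bar>"
  then have "u^2 \<le> v^2" by (simp add: abs_le_square_iff)
  then have "- (v ^ 2) / (2 * \<sigma> ^ 2) \<le> - (u ^ 2) / (2 * \<sigma> ^ 2)"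
    by (intro divide_right_mono) auto
  then show ?thesis unfolding psi_def by simp
qed

lemma psi_even: "psi \<sigma> (-v) = psi \<sigma> v"
  unfolding psi_def by simp

lemma pair_ineq:
  fixes A B :: real and P R :: ennreal
  assumes "0 \<le> B" "B \<le> A" "R \<le> P"
  shows "ennreal B * P + ennreal A * R \<le> ennreal A * P + ennreal B * R"
proof -
  obtain E where E: "P = R + E" using assms(3) le_iff_add by blast
  have A: "ennreal A = ennreal B + ennreal (A - B)"
    using assms by (simp add: ennreal_plus[symmetric])
  show ?thesis unfolding E A
    by (simp add: distrib_left distrib_right add_ac)
qed

lemma split_reflect:
  fixes f :: "real \<Rightarrow> ennreal"
  assumes [measurable]: "f \<in> borel_measurable borel"
  shows "(\<integral>\<^sup>+x. f x \<partial>lborel) =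
    (\<integral>\<^sup>+x. f x * indicator {s/2..} x + f (s - x) * indicator {s/2<..} x \<partial>lborel)"
proof -
  have "(\<integral>\<^sup>+x. f x \<partial>lborel) =
     (\<integral>\<^sup>+x. f x * indicator {s/2..} x + f x * indicator {..<s/2} x \<partial>lborel)"
    by (intro nn_integral_cong) (auto split: split_indicator)
  also have "\<dots> = (\<integral>\<^sup>+x. f x * indicator {s/2..} x \<partial>lborel) +
      (\<integral>\<^sup>+x. f x * indicator {..<s/2} x \<partial>lborel)"
    by (intro nn_integral_add) auto
  also have "(\<integral>\<^sup>+x. f x * indicator {..<s/2} x \<partial>lborel) =
      ennreal \<bar>-1\<bar> * (\<integral>\<^sup>+x. f (s + (-1) * x) * indicator {..<s/2} (s + (-1) * x) \<partial>lborel)"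
    by (intro nn_integral_real_affine) auto
  also have "\<dots> = (\<integral>\<^sup>+x. f (s - x) * indicator {s/2<..} x \<partial>lborel)"
    by (simp, intro nn_integral_cong) (auto split: split_indicator)
  also have "(\<integral>\<^sup>+x. f x * indicator {s/2..} x \<partial>lborel) +
      (\<integral>\<^sup>+x. f (s - x) * indicator {s/2<..} x \<partial>lborel) =
    (\<integral>\<^sup>+x. f x * indicator {s/2..} x + f (s - x) * indicator {s/2<..} x \<partial>lborel)"
    by (intro nn_integral_add[symmetric]) auto
  finally show ?thesis .
qed


lemma conv_mono_pos:
  assumes w: "absmono w" and mm: "\<bar>m\<bar> \<le> m'"
  shows "(\<integral>\<^sup>+x. ennreal (psi \<sigma> (x - m)) * w x \<partial>lborel)
       \<le> (\<integral>\<^sup>+x. ennreal (psi \<sigma> (x - m')) * w x \<partial>lborel)"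
proof -
  define s where "s = m + m'"
  have s0: "0 \<le> s" using mm by (simp add: s_def)
  have [measurable]: "w \<in> borel_measurable borel" using absmono_meas[OF w] .
  have psim[measurable]: "(\<lambda>x. psi \<sigma> (x - c)) \<in> borel_measurable borel" for c
    unfolding psi_def by measurable
  have "(\<integral>\<^sup>+x. ennreal (psi \<sigma> (x - m)) * w x \<partial>lborel) =
    (\<integral>\<^sup>+x. ennreal (psi \<sigma> (x - m)) * w x * indicator {s/2..} x
        + ennreal (psi \<sigma> ((s - x) - m)) * w (s - x) * indicator {s/2<..} x \<partial>lborel)"
    by (rule split_reflect) measurable
  also have "\<dots> \<le> (\<integral>\<^sup>+x. ennreal (psi \<sigma> (x - m')) * w x * indicator {s/2..} x
        + ennreal (psi \<sigma> ((s - x) - m')) * w (s - x) * indicator {s/2<..} x \<partial>lborel)"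
  proof (rule nn_integral_mono)
    fix x
    show "ennreal (psi \<sigma> (x - m)) * w x * indicator {s/2..} x
        + ennreal (psi \<sigma> ((s - x) - m)) * w (s - x) * indicator {s/2<..} x
      \<le> ennreal (psi \<sigma> (x - m')) * w x * indicator {s/2..} x
        + ennreal (psi \<sigma> ((s - x) - m')) * w (s - x) * indicator {s/2<..} x"
    proof (cases "x < s/2")
      case True then show ?thesis by (simp add: indicator_def)
    next
      case False
      have ab: "\<bar>x - m'\<bar> \<le> \<bar>x - m\<bar>" using False mm unfolding s_def by auto
      have BA: "psi \<sigma> (x - m) \<le> psi \<sigma> (x - m')" by (rule psi_anti[OF ab])
      have e1: "psi \<sigma> ((s - x) - m) = psi \<sigma> (x - m')"
        using psi_even[of \<sigma> "x - m'"] by (simp add: s_def)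
      have e2: "psi \<sigma> ((s - x) - m') = psi \<sigma> (x - m)"
        using psi_even[of \<sigma> "x - m"] by (simp add: s_def)
      show ?thesis
      proof (cases "x = s/2")
        case True
        then show ?thesis using BA by (simp add: indicator_def mult_right_mono ennreal_leI)
      next
        case False2: False
        with False have gt: "x > s/2" by simp
        have RP: "w (s - x) \<le> w x" using w gt s0 unfolding absmono_def by auto
        have "ennreal (psi \<sigma> (x - m)) * w x + ennreal (psi \<sigma> (x - m')) * w (s - x)
          \<le> ennreal (psi \<sigma> (x - m')) * w x + ennreal (psi \<sigma> (x - m)) * w (s - x)"
          by (rule pair_ineq[OF _ BA RP]) (simp add: psi_def)
        then show ?thesis using gt by (simp add: indicator_def e1 e2)
      qed
    qed
  qed
  also have "\<dots> = (\<integral>\<^sup>+x. ennreal (psi \<sigma> (x - m')) * w x \<partial>lborel)"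
    by (rule split_reflect[symmetric]) measurable
  finally show ?thesis .
qed

lemma conv_sym:
  assumes w: "absmono w"
  shows "(\<integral>\<^sup>+x. ennreal (psi \<sigma> (x - m)) * w x \<partial>lborel)
       = (\<integral>\<^sup>+x. ennreal (psi \<sigma> (x - (-m))) * w x \<partial>lborel)"
proof -
  have [measurable]: "w \<in> borel_measurable borel" using absmono_meas[OF w] .
  have "(\<integral>\<^sup>+x. ennreal (psi \<sigma> (x - m)) * w x \<partial>lborel) =
    ennreal \<bar>-1\<bar> * (\<integral>\<^sup>+x. ennreal (psi \<sigma> ((0 + (-1) * x) - m)) * w (0 + (-1) * x) \<partial>lborel)"
    by (rule nn_integral_real_affine) (auto simp: psi_def)
  also have "\<dots> = (\<integral>\<^sup>+x. ennreal (psi \<sigma> (x - (-m))) * w x \<partial>lborel)"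
    using psi_even[of \<sigma> "x + m" for x] absmono_even[OF w]
    by (simp add: add.commute)
  finally show ?thesis .
qed

lemma conv_mono:
  assumes w: "absmono w" and mm: "\<bar>m\<bar> \<le> \<bar>m'\<bar>"
  shows "(\<integral>\<^sup>+x. ennreal (psi \<sigma> (x - m)) * w x \<partial>lborel)
       \<le> (\<integral>\<^sup>+x. ennreal (psi \<sigma> (x - m')) * w x \<partial>lborel)"
proof (cases "m' \<ge> 0")
  case True then show ?thesis using conv_mono_pos[OF w] mm by simp
next
  case False
  then have "\<bar>m\<bar> \<le> - m'" using mm by simp
  from conv_mono_pos[OF w this] show ?thesis using conv_sym[OF w, of \<sigma> m'] by simp
qed


definition Vmono :: "(real \<Rightarrow> nat \<Rightarrow> ennreal) \<Rightarrow> bool" where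
  "Vmono W \<longleftrightarrow> (\<forall>c. absmono (\<lambda>x. W x c))"

lemma cont_mono:
  assumes "Vmono W" "\<bar>m\<bar> \<le> \<bar>m'\<bar>"
  shows "cont_term \<sigma> p01 p10 W c m \<le> cont_term \<sigma> p01 p10 W c m'"
  unfolding cont_term_def
  by (intro sum_mono mult_left_mono conv_mono)
     (use assms in \<open>auto simp: Vmono_def\<close>)

lemma Q0_mono:
  assumes "Vmono W" "\<gamma> \<ge> 0" "\<bar>x\<bar> \<le> \<bar>y\<bar>"
  shows "Qstep a \<sigma> \<gamma> lam p01 p10 W x c 0 \<le> Qstep a \<sigma> \<gamma> lam p01 p10 W y c 0"
proof -
  have "x^2 \<le> y^2" using assms(3) by (simp add: abs_le_square_iff)
  then have e: "exp (\<gamma> * x^2) \<le> exp (\<gamma> * y^2)" using assms(2) by (simp add: mult_left_mono)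
  have "\<bar>a * x\<bar> \<le> \<bar>a * y\<bar>" using assms(3) by (simp add: abs_mult mult_left_mono)
  from cont_mono[OF assms(1) this] e show ?thesis
    unfolding Qstep_def by (simp add: mult_mono ennreal_leI)
qed

lemma Q1_mono:
  assumes "Vmono W" "\<gamma> \<ge> 0" "\<bar>x\<bar> \<le> \<bar>y\<bar>"
  shows "Qstep a \<sigma> \<gamma> lam p01 p10 W x c 1 \<le> Qstep a \<sigma> \<gamma> lam p01 p10 W y c 1"
proof (cases "c = 0")
  case True
  have "x^2 \<le> y^2" using assms(3) by (simp add: abs_le_square_iff)
  then have e: "exp (\<gamma> * (lam + x^2)) \<le> exp (\<gamma> * (lam + y^2))" using assms(2) by (simp add: mult_left_mono)
  have "\<bar>a * x\<bar> \<le> \<bar>a * y\<bar>" using assms(3) by (simp add: abs_mult mult_left_mono)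
  from cont_mono[OF assms(1) this] e True show ?thesis
    unfolding Qstep_def by (simp add: mult_mono ennreal_leI)
next
  case False
  then have "(1 - real c) * z \<le> 0" if "z \<ge> 0" for z using that by (simp add: mult_nonpos_nonneg)
  then have "ennreal ((1 - real c) * exp z) = 0" for z by (simp add: ennreal_eq_0_iff)
  then show ?thesis unfolding Qstep_def by simp
qed

lemma V_mono: "\<gamma> \<ge> 0 \<Longrightarrow> Vmono (Vfun a \<sigma> \<gamma> lam p01 p10 t)"
proof (induction t)
  case 0 then show ?case by (simp add: Vmono_def absmono_def)
next
  case (Suc t)
  have IH: "Vmono (Vfun a \<sigma> \<gamma> lam p01 p10 t)" using Suc by simp
  show ?case unfolding Vmono_def absmono_def
  proof (intro allI impI)
    fix c and x y :: real assume xy: "\<bar>x\<bar> \<le> \<bar>y\<bar>"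
    show "Vfun a \<sigma> \<gamma> lam p01 p10 (Suc t) x c \<le> Vfun a \<sigma> \<gamma> lam p01 p10 (Suc t) y c"
      unfolding Vfun.simps
      by (rule min.mono; rule Q0_mono[OF IH Suc.prems xy] Q1_mono[OF IH Suc.prems xy])
  qed
qed

lemma generic:
  fixes q :: "real \<Rightarrow> nat \<Rightarrow> ennreal"
  assumes dc: "\<And>x y. \<bar>x\<bar> \<le> \<bar>y\<bar> \<Longrightarrow> q y 0 \<le> q y 1 \<Longrightarrow> q x 0 \<le> q x 1"
  shows "0 \<le> max 0 (SUP \<Delta>\<in>{\<Delta>. q \<Delta> 0 \<le> q \<Delta> 1}. ereal \<bar>\<Delta>\<bar>) \<and>
    (\<forall>\<Delta>. (if q \<Delta> 0 \<le> q \<Delta> 1 then 0 else 1::nat) \<in> {0,1} \<and>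
      (\<forall>u\<in>{0,1}. q \<Delta> (if q \<Delta> 0 \<le> q \<Delta> 1 then 0 else 1) \<le> q \<Delta> u) \<and>
      (ereal \<bar>\<Delta>\<bar> > max 0 (SUP \<Delta>\<in>{\<Delta>. q \<Delta> 0 \<le> q \<Delta> 1}. ereal \<bar>\<Delta>\<bar>) \<longrightarrow>
          (if q \<Delta> 0 \<le> q \<Delta> 1 then 0 else 1::nat) = 1) \<and>
      (ereal \<bar>\<Delta>\<bar> < max 0 (SUP \<Delta>\<in>{\<Delta>. q \<Delta> 0 \<le> q \<Delta> 1}. ereal \<bar>\<Delta>\<bar>) \<longrightarrow>
          (if q \<Delta> 0 \<le> q \<Delta> 1 then 0 else 1::nat) = 0))"
proof -
  let ?S = "SUP \<Delta>\<in>{\<Delta>. q \<Delta> 0 \<le> q \<Delta> 1}. ereal \<bar>\<Delta>\<bar>"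
  have A: "ereal \<bar>\<Delta>\<bar> > max 0 ?S \<Longrightarrow> \<not> q \<Delta> 0 \<le> q \<Delta> 1" for \<Delta>
  proof
    assume "ereal \<bar>\<Delta>\<bar> > max 0 ?S" "q \<Delta> 0 \<le> q \<Delta> 1"
    then have "ereal \<bar>\<Delta>\<bar> \<le> ?S" by (intro SUP_upper) auto
    with \<open>ereal \<bar>\<Delta>\<bar> > max 0 ?S\<close> show False by auto
  qed
  have B: "ereal \<bar>\<Delta>\<bar> < max 0 ?S \<Longrightarrow> q \<Delta> 0 \<le> q \<Delta> 1" for \<Delta>
  proof -
    assume "ereal \<bar>\<Delta>\<bar> < max 0 ?S"
    then have "ereal \<bar>\<Delta>\<bar> < ?S" by (auto simp: max_def split: if_splits)
    then obtain y where "q y 0 \<le> q y 1" "ereal \<bar>\<Delta>\<bar> < ereal \<bar>y\<bar>"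
      by (auto simp: less_SUP_iff)
    then show ?thesis using dc[of \<Delta> y] by simp
  qed
  show ?thesis
    apply (intro conjI allI)
    subgoal by simp
    subgoal by simp
    subgoal for \<Delta> by (cases "q \<Delta> 0 \<le> q \<Delta> 1") (simp_all add: not_le less_imp_le)
    subgoal for \<Delta> using A[of \<Delta>] by (intro impI) simp
    subgoal for \<Delta> using B[of \<Delta>] by (intro impI) simp
    done
qed

theorem corollary1:
  fixes a \<sigma> \<gamma> lam p01 p10 :: real and T :: nat
  assumes "\<sigma> > 0" and "\<gamma> > 0" and "lam > 0" and "T \<ge> 1"
    and "0 \<le> p01" and "p01 \<le> 1" and "0 \<le> p10" and "p10 \<le> 1"
  shows "\<exists>(\<phi> :: nat \<Rightarrow> real \<Rightarrow> nat \<Rightarrow> nat) (thr :: nat \<Rightarrow> nat \<Rightarrow> ereal).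
     \<forall>t\<in>{1..T}. \<forall>c\<in>{0,1}.
       0 \<le> thr t c \<and>
       (\<forall>\<Delta>::real.
          \<phi> t \<Delta> c \<in> {0,1} \<and>
          (\<forall>u\<in>{0,1}. Qfun a \<sigma> \<gamma> lam p01 p10 t \<Delta> c (\<phi> t \<Delta> c) \<le> Qfun a \<sigma> \<gamma> lam p01 p10 t \<Delta> c u) \<and>
          (ereal \<bar>\<Delta>\<bar> > thr t c \<longrightarrow> \<phi> t \<Delta> c = 1) \<and>
          (ereal \<bar>\<Delta>\<bar> < thr t c \<longrightarrow> \<phi> t \<Delta> c = 0))"
proof -
  let ?Q = "Qfun a \<sigma> \<gamma> lam p01 p10"
  have dc: "?Q t x c 0 \<le> ?Q t x c 1"
    if c: "c \<in> {0,1}" and xy: "\<bar>x\<bar> \<le> \<bar>y\<bar>" and yD: "?Q t y c 0 \<le> ?Q t y c 1" for t c x y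
  proof -
    let ?W = "Vfun a \<sigma> \<gamma> lam p01 p10 (t - 1)"
    have Vm: "Vmono ?W" using V_mono assms(2) by simp
    show ?thesis
    proof (cases "c = 0")
      case True
      have "exp (\<gamma> * x\<^sup>2) \<le> exp (\<gamma> * (lam + x\<^sup>2))" using assms(2,3) by simp
      then have "ennreal (exp (\<gamma> * x\<^sup>2)) * cont_term \<sigma> p01 p10 ?W c (a * x)
          \<le> ennreal (exp (\<gamma> * (lam + x\<^sup>2))) * cont_term \<sigma> p01 p10 ?W c (a * x)"
        by (intro mult_right_mono ennreal_leI) auto
      then show ?thesis using True unfolding Qfun_def Qstep_def by (simp add: add_increasing2)
    next
      case False
      with c have c1: "c = 1" by simp
      have "?Q t x c 0 \<le> ?Q t y c 0" unfolding Qfun_def by (rule Q0_mono[OF Vm]) (use assms(2) xy in auto)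
      also note yD
      also have "?Q t y c 1 = ?Q t x c 1" using c1 unfolding Qfun_def Qstep_def by simp
      finally show ?thesis .
    qed
  qed
  show ?thesis
  proof (rule exI[of _ "\<lambda>t \<Delta> c. if ?Q t \<Delta> c 0 \<le> ?Q t \<Delta> c 1 then 0 else 1"],
      rule exI[of _ "\<lambda>t c. max 0 (SUP \<Delta>\<in>{\<Delta>. ?Q t \<Delta> c 0 \<le> ?Q t \<Delta> c 1}. ereal \<bar>\<Delta>\<bar>)"],
      intro ballI)
    fix t c assume "t \<in> {1..T}" and c: "c \<in> {(0::nat),1}"
    have "\<And>x y. \<bar>x\<bar> \<le> \<bar>y\<bar> \<Longrightarrow> ?Q t y c 0 \<le> ?Q t y c 1 \<Longrightarrow> ?Q t x c 0 \<le> ?Q t x c 1"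
      using dc[OF c] by blast
    then show "0 \<le> max 0 (SUP \<Delta>\<in>{\<Delta>. ?Q t \<Delta> c 0 \<le> ?Q t \<Delta> c 1}. ereal \<bar>\<Delta>\<bar>) \<and>
       (\<forall>\<Delta>::real.
          (if ?Q t \<Delta> c 0 \<le> ?Q t \<Delta> c 1 then 0 else 1::nat) \<in> {0,1} \<and>
          (\<forall>u\<in>{0,1}. ?Q t \<Delta> c (if ?Q t \<Delta> c 0 \<le> ?Q t \<Delta> c 1 then 0 else 1) \<le> ?Q t \<Delta> c u) \<and>
          (ereal \<bar>\<Delta>\<bar> > max 0 (SUP \<Delta>\<in>{\<Delta>. ?Q t \<Delta> c 0 \<le> ?Q t \<Delta> c 1}. ereal \<bar>\<Delta>\<bar>) \<longrightarrow> (if ?Q t \<Delta> c 0 \<le> ?Q t \<Delta> c 1 then 0 else 1) = (1::nat)) \<and>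
          (ereal \<bar>\<Delta>\<bar> < max 0 (SUP \<Delta>\<in>{\<Delta>. ?Q t \<Delta> c 0 \<le> ?Q t \<Delta> c 1}. ereal \<bar>\<Delta>\<bar>) \<longrightarrow> (if ?Q t \<Delta> c 0 \<le> ?Q t \<Delta> c 1 then 0 else 1) = (0::nat)))"
      by (rule generic[of "\<lambda>\<Delta> u. ?Q t \<Delta> c u"])
  qed
qed

end
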